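(* Let $G=K(n_1,\dots,n_s)$ be a complete $s$-partite graph ($s\ge 2$) with parts $V_1,\dots,V_s$, $|V_j|=n_j$. If $j\in\{1,\dots,s\}$ satisfies $n_j\ge 2$, then $\chi_1(G)=\chi_1(G-V_j)+1$.
   Context: A map $f:V(G)\to\{1,\dots,k\}$ is a $1$-relaxed $k$-coloring if every vertex $u$ has at most one neighbor $v$ with $f(v)=f(u)$; $\chi_1(G)$ is the minimum $k$ for which such a coloring exists. $G-V_j$ is the graph obtained by deleting the vertices of $V_j$. *)

theory Defs
  imports Main
begin

text \<open>A simple graph is given by a vertex set V and a symmetric irreflexive
  adjacency relation E. Induced subgraphs are obtained by shrinking V.\<close>

definition relaxed1_coloring ::
  "'a set \<Rightarrow> ('a \<Rightarrow> 'a \<Rightarrow> bool) \<Rightarrow> nat \<Rightarrow> ('a \<Rightarrow> nat) \<Rightarrow> bool" where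
  "relaxed1_coloring V E k f \<longleftrightarrow>
     (\<forall>u\<in>V. f u \<in> {1..k}) \<and>
     (\<forall>u\<in>V. card {v\<in>V. E u v \<and> f v = f u} \<le> 1)"

definition chi1 :: "'a set \<Rightarrow> ('a \<Rightarrow> 'a \<Rightarrow> bool) \<Rightarrow> nat" where
  "chi1 V E = (LEAST k. \<exists>f. relaxed1_coloring V E k f)"

text \<open>Complete multipartite graph K(n_1,...,n_s): vertex (j,i) lies in part V_j
  (1 \<le> j \<le> s, i < n_j); two vertices are adjacent iff they lie in different parts.\<close>

definition kpart_vertices :: "nat \<Rightarrow> (nat \<Rightarrow> nat) \<Rightarrow> (nat \<times> nat) set" where
  "kpart_vertices s n = {(j, i). j \<in> {1..s} \<and> i < n j}"

definition kpart_part :: "(nat \<Rightarrow> nat) \<Rightarrow> nat \<Rightarrow> (nat \<times> nat) set" where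
  "kpart_part n j = {(j, i) | i. i < n j}"

definition kpart_adj :: "nat \<times> nat \<Rightarrow> nat \<times> nat \<Rightarrow> bool" where
  "kpart_adj x y \<longleftrightarrow> fst x \<noteq> fst y"

end

theory Submission
  imports Defs
begin

lemma r1_iff:
  assumes "finite V"
  shows "relaxed1_coloring V E k f \<longleftrightarrow> (\<forall>u\<in>V. f u \<in> {1..k}) \<and>
     (\<forall>u\<in>V. \<forall>v\<in>V. \<forall>w\<in>V. E u v \<longrightarrow> f v = f u \<longrightarrow> E u w \<longrightarrow> f w = f u \<longrightarrow> v = w)"
proof -
  have C: "\<And>u. (card {v\<in>V. E u v \<and> f v = f u} \<le> 1) =
     (\<forall>v\<in>V. \<forall>w\<in>V. E u v \<longrightarrow> f v = f u \<longrightarrow> E u w \<longrightarrow> f w = f u \<longrightarrow> v = w)"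
  proof -
    fix u
    have fs: "finite {v\<in>V. E u v \<and> f v = f u}" using assms by simp
    have "(card {v\<in>V. E u v \<and> f v = f u} \<le> Suc 0) =
      (\<forall>a\<in>{v\<in>V. E u v \<and> f v = f u}. \<forall>b\<in>{v\<in>V. E u v \<and> f v = f u}. a = b)"
      by (rule card_le_Suc0_iff_eq[OF fs])
    also have "\<dots> = (\<forall>v\<in>V. \<forall>w\<in>V. E u v \<longrightarrow> f v = f u \<longrightarrow> E u w \<longrightarrow> f w = f u \<longrightarrow> v = w)"
      by blast
    finally show "?thesis u" by simp
  qed
  show ?thesis unfolding relaxed1_coloring_def C by (rule refl)
qed

lemma recolor:
  assumes "finite V" "relaxed1_coloring V E k f" "c \<in> {1..k}" "\<forall>v\<in>V. f v \<noteq> c"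
  shows "relaxed1_coloring V E (k-1) (\<lambda>v. if f v = k then c else f v)"
proof -
  have eq: "\<And>u v. u \<in> V \<Longrightarrow> v \<in> V \<Longrightarrow>
      ((if f v = k then c else f v) = (if f u = k then c else f u)) = (f v = f u)"
  proof -
    fix u v assume "u \<in> V" "v \<in> V"
    then have "f u \<noteq> c" "f v \<noteq> c" using assms(4) by blast+
    then show "?thesis u v" by (cases "f v = k"; cases "f u = k") simp_all
  qed
  have rng: "\<forall>u\<in>V. f u \<in> {1..k}" using assms(1,2) r1_iff by blast
  have "\<forall>u\<in>V. (if f u = k then c else f u) \<in> {1..k-1}"
  proof
    fix u assume "u \<in> V"
    show "(if f u = k then c else f u) \<in> {1..k-1}"
    proof (cases "c = k")
      case True
      then show ?thesis using rng assms(4) \<open>u\<in>V\<close> by fastforce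
    next
      case False
      then show ?thesis using rng assms(3) \<open>u\<in>V\<close> by fastforce
    qed
  qed
  moreover have uq: "\<forall>u\<in>V. \<forall>v\<in>V. \<forall>w\<in>V. E u v \<longrightarrow> f v = f u \<longrightarrow> E u w \<longrightarrow> f w = f u \<longrightarrow> v = w"
    using assms(2) unfolding r1_iff[OF assms(1)] by blast
  ultimately show ?thesis unfolding r1_iff[OF assms(1)]
  proof (intro conjI)
    show "\<forall>u\<in>V. \<forall>v\<in>V. \<forall>w\<in>V. E u v \<longrightarrow>
      (if f v = k then c else f v) = (if f u = k then c else f u) \<longrightarrow>
      E u w \<longrightarrow> (if f w = k then c else f w) = (if f u = k then c else f u) \<longrightarrow> v = w"
    proof (intro ballI impI)
      fix u v w assume "u \<in> V" "v \<in> V" "w \<in> V" "E u v" "E u w"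
        "(if f v = k then c else f v) = (if f u = k then c else f u)"
        "(if f w = k then c else f w) = (if f u = k then c else f u)"
      then have "f v = f u" "f w = f u" using eq by blast+
      then show "v = w" using \<open>E u v\<close> \<open>E u w\<close> \<open>u \<in> V\<close> \<open>v \<in> V\<close> \<open>w \<in> V\<close> uq by blast
    qed
  qed
qed

lemma restrict:
  assumes "finite V" "W \<subseteq> V" "relaxed1_coloring V E k f"
  shows "relaxed1_coloring W E k f"
proof -
  have "(\<forall>u\<in>V. f u \<in> {1..k}) \<and>
     (\<forall>u\<in>V. \<forall>v\<in>V. \<forall>w\<in>V. E u v \<longrightarrow> f v = f u \<longrightarrow> E u w \<longrightarrow> f w = f u \<longrightarrow> v = w)"
    using assms(3) r1_iff[OF assms(1)] by blast
  then have "(\<forall>u\<in>W. f u \<in> {1..k}) \<and>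
     (\<forall>u\<in>W. \<forall>v\<in>W. \<forall>w\<in>W. E u v \<longrightarrow> f v = f u \<longrightarrow> E u w \<longrightarrow> f w = f u \<longrightarrow> v = w)"
    using assms(2) by blast
  then show ?thesis using r1_iff[OF finite_subset[OF assms(2,1)]] by blast
qed

lemma fst_col: "W \<subseteq> kpart_vertices s n \<Longrightarrow> relaxed1_coloring W kpart_adj s fst"
proof -
  assume W: "W \<subseteq> kpart_vertices s n"
  have e: "\<And>u. {v\<in>W. kpart_adj u v \<and> fst v = fst u} = {}" unfolding kpart_adj_def by auto
  show ?thesis unfolding relaxed1_coloring_def e using W unfolding kpart_vertices_def by auto
qed

lemma chi1_ex: "W \<subseteq> kpart_vertices s n \<Longrightarrow> relaxed1_coloring W kpart_adj (chi1 W kpart_adj) (SOME f. relaxed1_coloring W kpart_adj (chi1 W kpart_adj) f)"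
proof -
  assume W: "W \<subseteq> kpart_vertices s n"
  have "\<exists>f. relaxed1_coloring W kpart_adj s f" using fst_col[OF W] by blast
  then have "\<exists>k f. relaxed1_coloring W kpart_adj k f" by blast
  then have "\<exists>f. relaxed1_coloring W kpart_adj (chi1 W kpart_adj) f"
    unfolding chi1_def by (rule LeastI_ex)
  then show ?thesis by (rule someI_ex)
qed

lemma fin: "finite (kpart_vertices s n)"
proof -
  have "kpart_vertices s n = Sigma {1..s} (\<lambda>j. {..<n j})"
    unfolding kpart_vertices_def Sigma_def by auto
  then show ?thesis by simp
qed

theorem corollary4p2:
  fixes s :: nat and n :: "nat \<Rightarrow> nat" and j :: nat
  assumes "s \<ge> 2"
    and "\<forall>i\<in>{1..s}. n i \<ge> 1"
    and "j \<in> {1..s}"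
    and "n j \<ge> 2"
  shows "chi1 (kpart_vertices s n) kpart_adj
         = chi1 (kpart_vertices s n - kpart_part n j) kpart_adj + 1"
proof -
  define V where "V = kpart_vertices s n"
  define W where "W = V - kpart_part n j"
  have finV: "finite V" unfolding V_def by (rule fin)
  have finW: "finite W" unfolding W_def using finV by simp
  have WV: "W \<subseteq> V" unfolding W_def by auto
  have Wchar: "\<And>v. v \<in> W \<longleftrightarrow> v \<in> V \<and> fst v \<noteq> j"
    unfolding W_def kpart_part_def V_def kpart_vertices_def by auto
  define kW where "kW = chi1 W kpart_adj"
  define kV where "kV = chi1 V kpart_adj"
  obtain fW where fW: "relaxed1_coloring W kpart_adj kW fW"
    using chi1_ex[of W s n] WV unfolding kW_def V_def by blast
  obtain fV where fV: "relaxed1_coloring V kpart_adj kV fV"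
    using chi1_ex[of V s n] unfolding kV_def V_def by blast
  define g where "g v = (if fst v = j then kW + 1 else fW v)" for v
  have fWr: "\<forall>u\<in>W. fW u \<in> {1..kW}" and fWu: "\<forall>u\<in>W. \<forall>v\<in>W. \<forall>w\<in>W. kpart_adj u v \<longrightarrow> fW v = fW u \<longrightarrow> kpart_adj u w \<longrightarrow> fW w = fW u \<longrightarrow> v = w"
    using fW unfolding r1_iff[OF finW] by blast+
  have "relaxed1_coloring V kpart_adj (kW+1) g"
    unfolding r1_iff[OF finV]
  proof (intro conjI ballI impI)
    fix u assume "u \<in> V" show "g u \<in> {1..kW+1}"
    proof (cases "fst u = j")
      case True then show ?thesis unfolding g_def by simp
    next
      case False
      then have "u \<in> W" using Wchar \<open>u \<in> V\<close> by blast
      then have "fW u \<in> {1..kW}" using fWr by blast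
      then show ?thesis using False unfolding g_def by simp
    qed
  next
    fix u v w assume h: "u \<in> V" "v \<in> V" "w \<in> V" "kpart_adj u v" "g v = g u" "kpart_adj u w" "g w = g u"
    show "v = w"
    proof (cases "fst u = j")
      case True
      have "fst v = j"
      proof (rule ccontr)
        assume "fst v \<noteq> j"
        then have "v \<in> W" using Wchar[of v] h(2) by blast
        then have "fW v \<in> {1..kW}" using fWr by blast
        then have "fW v \<le> kW" by simp
        moreover have "g v = fW v" using \<open>fst v \<noteq> j\<close> unfolding g_def by simp
        moreover have "g u = kW + 1" using True unfolding g_def by simp
        ultimately show False using h(5) by simp
      qed
      then show ?thesis using h(4) True unfolding kpart_adj_def by simp
    next
      case False
      then have uW: "u \<in> W" using Wchar[of u] h(1) by blast
      then have "fW u \<in> {1..kW}" using fWr by blast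
      then have ule: "fW u \<le> kW" by simp
      have gu: "g u = fW u" using False unfolding g_def by simp
      have vj: "fst v \<noteq> j"
      proof
        assume "fst v = j" then have "g v = kW + 1" unfolding g_def by simp
        then show False using h(5) gu ule by simp
      qed
      have wj: "fst w \<noteq> j"
      proof
        assume "fst w = j" then have "g w = kW + 1" unfolding g_def by simp
        then show False using h(7) gu ule by simp
      qed
      have vW: "v \<in> W" using Wchar[of v] h(2) vj by blast
      have wW: "w \<in> W" using Wchar[of w] h(3) wj by blast
      have "fW v = fW u" using h(5) gu vj unfolding g_def by simp
      moreover have "fW w = fW u" using h(7) gu wj unfolding g_def by simp
      ultimately show ?thesis using fWu[rule_format, OF uW vW wW] h(4,6) by blast
    qed
  qed
  then have "\<exists>f. relaxed1_coloring V kpart_adj (kW+1) f" by blast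
  then have up: "kV \<le> kW + 1" unfolding kV_def chi1_def by (rule Least_le)
  have fVr: "\<forall>u\<in>V. fV u \<in> {1..kV}" and fVu: "\<forall>u\<in>V. \<forall>v\<in>V. \<forall>w\<in>V. kpart_adj u v \<longrightarrow> fV v = fV u \<longrightarrow> kpart_adj u w \<longrightarrow> fV w = fV u \<longrightarrow> v = w"
    using fV unfolding r1_iff[OF finV] by blast+
  define a where "a = (j, 0::nat)"
  define b where "b = (j, 1::nat)"
  have aV: "a \<in> V" and bV: "b \<in> V" using assms(3,4) unfolding a_def b_def V_def kpart_vertices_def by auto
  have adjW: "\<And>x v. fst x = j \<Longrightarrow> v \<in> W \<Longrightarrow> kpart_adj x v" using Wchar unfolding kpart_adj_def by auto
  have fa: "fst a = j" "fst b = j" "a \<noteq> b" unfolding a_def b_def by auto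
  have "\<exists>h. relaxed1_coloring W kpart_adj (kV - 1) h"
  proof (cases "fV a = fV b")
    case True
    have "\<forall>v\<in>W. fV v \<noteq> fV b"
    proof
      fix v assume v: "v \<in> W"
      show "fV v \<noteq> fV b"
      proof
        assume "fV v = fV b"
        have "kpart_adj v a" "kpart_adj v b" using adjW[OF fa(1) v] adjW[OF fa(2) v] unfolding kpart_adj_def by simp_all
        moreover have "v \<in> V" using v WV by auto
        moreover have "fV a = fV v" "fV b = fV v" using True \<open>fV v = fV b\<close> by simp_all
        ultimately have "a = b" using fVu[rule_format, OF \<open>v \<in> V\<close> aV bV] by blast
        then show False using fa by simp
      qed
    qed
    moreover have "relaxed1_coloring W kpart_adj kV fV" by (rule restrict[OF finV WV fV])
    ultimately show ?thesis using recolor[OF finW] fVr bV by blast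
  next
    case False
    define f' where "f' v = (if fV v = fV b then fV a else fV v)" for v
    have "relaxed1_coloring W kpart_adj kV f'"
      unfolding r1_iff[OF finW]
    proof (intro conjI ballI impI)
      fix u assume "u \<in> W" then have "u \<in> V" using WV by blast
      then show "f' u \<in> {1..kV}" using fVr aV unfolding f'_def by (cases "fV u = fV b") simp_all
    next
      fix u v w assume h: "u \<in> W" "v \<in> W" "w \<in> W" "kpart_adj u v" "f' v = f' u" "kpart_adj u w" "f' w = f' u"
      have uV: "u \<in> V" and vV: "v \<in> V" and wV: "w \<in> V" using h WV by auto
      have aa: "\<And>x. x \<in> W \<Longrightarrow> kpart_adj a x" "\<And>x. x \<in> W \<Longrightarrow> kpart_adj b x" using adjW fa by auto
      have irr: "\<And>x. \<not> kpart_adj x x" unfolding kpart_adj_def by auto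
      have A: "\<And>x y. x \<in> W \<Longrightarrow> y \<in> W \<Longrightarrow> fV x = fV a \<Longrightarrow> fV y = fV a \<Longrightarrow> x = y"
      proof -
        fix x y assume "x \<in> W" "y \<in> W" "fV x = fV a" "fV y = fV a"
        moreover have "x \<in> V" "y \<in> V" using \<open>x \<in> W\<close> \<open>y \<in> W\<close> WV by blast+
        moreover have "kpart_adj a x" "kpart_adj a y" using aa \<open>x \<in> W\<close> \<open>y \<in> W\<close> by blast+
        ultimately show "x = y" using fVu[rule_format, OF aV, of x y] by simp
      qed
      have B: "\<And>x y. x \<in> W \<Longrightarrow> y \<in> W \<Longrightarrow> fV x = fV b \<Longrightarrow> fV y = fV b \<Longrightarrow> x = y"
      proof -
        fix x y assume "x \<in> W" "y \<in> W" "fV x = fV b" "fV y = fV b"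
        moreover have "x \<in> V" "y \<in> V" using \<open>x \<in> W\<close> \<open>y \<in> W\<close> WV by blast+
        moreover have "kpart_adj b x" "kpart_adj b y" using aa \<open>x \<in> W\<close> \<open>y \<in> W\<close> by blast+
        ultimately show "x = y" using fVu[rule_format, OF bV, of x y] by simp
      qed
      show "v = w"
      proof (cases "f' u = fV a")
        case True
        have fc: "\<And>x. f' x = fV a \<Longrightarrow> fV x = fV a \<or> fV x = fV b"
        proof -
          fix x assume "f' x = fV a" then show "fV x = fV a \<or> fV x = fV b"
            unfolding f'_def by (cases "fV x = fV b") simp_all
        qed
        have fva: "f' v = fV a" and fwa: "f' w = fV a" using True h(5,7) by simp_all
        have dv: "fV v = fV a \<or> fV v = fV b" using fc[OF fva] .
        have dw: "fV w = fV a \<or> fV w = fV b" using fc[OF fwa] .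
        have du: "fV u = fV a \<or> fV u = fV b" using fc[OF True] .
        have nuv: "u \<noteq> v" using h(4) irr by blast
        have nuw: "u \<noteq> w" using h(6) irr by blast
        show ?thesis
        proof (rule disjE[OF dv])
          assume va: "fV v = fV a"
          show ?thesis
          proof (rule disjE[OF dw])
            assume "fV w = fV a" then show ?thesis using A[OF h(2) h(3) va] by blast
          next
            assume wb: "fV w = fV b"
            show ?thesis
            proof (rule disjE[OF du])
              assume "fV u = fV a" then have "u = v" using A[OF h(1) h(2)] va by blast
              then show ?thesis using nuv by blast
            next
              assume "fV u = fV b" then have "u = w" using B[OF h(1) h(3)] wb by blast
              then show ?thesis using nuw by blast
            qed
          qed
        next
          assume vb: "fV v = fV b"
          show ?thesis
          proof (rule disjE[OF dw])
            assume "fV w = fV b" then show ?thesis using B[OF h(2) h(3) vb] by blast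
          next
            assume wa: "fV w = fV a"
            show ?thesis
            proof (rule disjE[OF du])
              assume "fV u = fV a" then have "u = w" using A[OF h(1) h(3)] wa by blast
              then show ?thesis using nuw by blast
            next
              assume "fV u = fV b" then have "u = v" using B[OF h(1) h(2)] vb by blast
              then show ?thesis using nuv by blast
            qed
          qed
        qed
      next
        case False
        have fo: "\<And>x. f' x \<noteq> fV a \<Longrightarrow> f' x = fV x"
        proof -
          fix x assume "f' x \<noteq> fV a" then show "f' x = fV x"
            unfolding f'_def by (cases "fV x = fV b") simp_all
        qed
        have "f' v \<noteq> fV a" "f' w \<noteq> fV a" using False h(5,7) by simp_all
        then have "fV v = fV u" "fV w = fV u" using fo[of v] fo[of w] fo[OF False] h(5,7) by simp_all
        then show ?thesis using fVu[rule_format, OF uV vV wV] h(4,6) by blast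
      qed
    qed
    moreover have "\<forall>v\<in>W. f' v \<noteq> fV b" unfolding f'_def using False by simp
    ultimately show ?thesis using recolor[OF finW] fVr bV by blast
  qed
  then have "kW \<le> kV - 1" unfolding kW_def chi1_def by (rule Least_le)
  moreover have "kV \<ge> 1" using fVr aV by fastforce
  ultimately show ?thesis using up unfolding kV_def kW_def V_def W_def by linarith
qed

end
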